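(* Fix an integer $K\ge0$, $\kappa\ge2$ and $a\in\,]0,\infty[$. Consider the regime $\ell\to\infty$, $q\to0$, $\ell q\to a$. For all $\ell$ large enough and $q$ small enough (with $\ell q$ close enough to $a$), the matrix $(M^{K+1}_H(b,c))_{0\le b,c\le\ell}$ is stochastic (nonnegative entries, rows summing to $1$), and $$\forall b,c\in\{0,\dots,\ell\}\qquad \sum_{h=0}^c M_H(b,h)\le\sum_{h=0}^c M^{K+1}_H(b,h).$$ Equivalently, the quantile maps satisfy $\mathcal M'_H(b,u)\ge\mathcal M^{K+1}_H(b,u)$ for all $b\in\{0,\dots,\ell\}$, $u\in[0,1]$.
   Context: Let $q\in\,]0,1-1/\kappa[$ and $p=\kappa q/(\kappa-1)$. The lumped mutation matrix on Hamming classes $\{0,\dots,\ell\}$ is $$M_H(b,c)=\sum_{\substack{0\le k\le\ell-b,\ 0\le l\le b\\ k-l=c-b}}\binom{\ell-b}{k}\binom{b}{l}\Big(p\big(1-\tfrac1\kappa\big)\Big)^k\Big(1-p\big(1-\tfrac1\kappa\big)\Big)^{\ell-b-k}\Big(\frac p\kappa\Big)^l\Big(1-\frac p\kappa\Big)^{b-l}.$$ Assume $K+2\le\ell$. The modified matrix $M^{K+1}_H$ is defined as follows. For $b\in\{0,\dots,K+1\}$: $M^{K+1}_H(b,c)=M_H(c+1,c)$ if $0\le c<b$; $M^{K+1}_H(b,c)=M_H(b,c)$ if $b\le c\le K$; $M^{K+1}_H(b,c)=0$ if $K+2\le c\le\ell$; and $M^{K+1}_H(b,K+1)=1-\sum_{h=0}^{b-1}M_H(h+1,h)-\sum_{h=b}^KM_H(b,h)$.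 For $b\in\{K+2,\dots,\ell\}$: $M^{K+1}_H(b,c)=M_H(b,c)$ for all $c$. For $b\in\{0,\dots,\ell\}$, $u\in[0,1]$, $\mathcal M'_H(b,u)$ is the unique $c$ with $\sum_{h<c}M_H(b,h)<u\le\sum_{h\le c}M_H(b,h)$, and $\mathcal M^{K+1}_H(b,u)$ is defined in the same way with $M^{K+1}_H$ in place of $M_H$. *)

theory Defs
  imports Complex_Main
begin

definition pmut :: "nat \<Rightarrow> real \<Rightarrow> real" where
  "pmut \<kappa> q = real \<kappa> * q / (real \<kappa> - 1)"

text \<open>Lumped mutation matrix M_H(b,c) on Hamming classes {0..ell}.\<close>
definition MH :: "nat \<Rightarrow> nat \<Rightarrow> real \<Rightarrow> nat \<Rightarrow> nat \<Rightarrow> real" where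
  "MH \<kappa> ell q b c =
     (let p = pmut \<kappa> q in
      \<Sum>k\<in>{0..ell - b}. \<Sum>l\<in>{0..b}.
        if int k - int l = int c - int b then
          real ((ell - b) choose k) * real (b choose l)
          * (p * (1 - 1 / real \<kappa>)) ^ k * (1 - p * (1 - 1 / real \<kappa>)) ^ (ell - b - k)
          * (p / real \<kappa>) ^ l * (1 - p / real \<kappa>) ^ (b - l)
        else 0)"

definition MHK :: "nat \<Rightarrow> nat \<Rightarrow> real \<Rightarrow> nat \<Rightarrow> nat \<Rightarrow> nat \<Rightarrow> real" where
  "MHK \<kappa> ell q K b c =
     (if b \<le> K + 1 then
        (if c < b then MH \<kappa> ell q (c + 1) c
         else if c \<le> K then MH \<kappa> ell q b c
         else if c = K + 1 then
           1 - (\<Sum>h<b. MH \<kappa> ell q (h + 1) h) - (\<Sum>h\<in>{b..K}. MH \<kappa> ell q b h)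
         else 0)
      else MH \<kappa> ell q b c)"

definition quant :: "(nat \<Rightarrow> nat \<Rightarrow> real) \<Rightarrow> nat \<Rightarrow> nat \<Rightarrow> real \<Rightarrow> nat" where
  "quant M ell b u = (THE c. c \<le> ell \<and> (\<Sum>h<c. M b h) < u \<and> u \<le> (\<Sum>h\<le>c. M b h))"

end

theory Submission
  imports Defs
begin

definition bino :: "nat \<Rightarrow> real \<Rightarrow> nat \<Rightarrow> real" where
  "bino n x k = real (n choose k) * x ^ k * (1 - x) ^ (n - k)"

lemma bino_nonneg: "0 \<le> x \<Longrightarrow> x \<le> 1 \<Longrightarrow> 0 \<le> bino n x k"
  unfolding bino_def by simp

lemma bino_sum: "(\<Sum>k\<in>{0..n}. bino n x k) = 1"
proof -
  have "(x + (1 - x)) ^ n = (\<Sum>k\<le>n. real (n choose k) * x ^ k * (1 - x) ^ (n - k))"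
    by (rule binomial_ring)
  then show ?thesis by (simp add: bino_def atLeast0AtMost)
qed

lemma bino_tail:
  assumes "0 \<le> x" "x \<le> 1"
  shows "(\<Sum>k\<in>{0..n}. if m \<le> k then bino n x k else 0) \<le> 2 ^ n * x ^ m"
proof -
  have "(\<Sum>k\<in>{0..n}. if m \<le> k then bino n x k else 0) \<le> (\<Sum>k\<in>{0..n}. real (n choose k) * x ^ m)"
  proof (rule sum_mono)
    fix k assume "k \<in> {0..n}"
    show "(if m \<le> k then bino n x k else 0) \<le> real (n choose k) * x ^ m"
    proof (cases "m \<le> k")
      case True
      have "x ^ k \<le> x ^ m" using assms True by (simp add: power_decreasing)
      moreover have "(1 - x) ^ (n - k) \<le> 1" using assms by (simp add: power_le_one)
      moreover have "0 \<le> x ^ k" using assms by simp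
      ultimately have "x ^ k * (1 - x) ^ (n - k) \<le> x ^ m"
        by (metis mult_le_one mult.commute mult_left_le order_trans assms(1) assms(2) zero_le_power le_diff_eq diff_ge_0_iff_ge)
      then show ?thesis using True unfolding bino_def
        by (simp add: mult.assoc mult_left_mono)
    qed (use assms in simp)
  qed
  also have "\<dots> = 2 ^ n * x ^ m"
    by (simp add: sum_distrib_right[symmetric] atLeast0AtMost flip: of_nat_sum choose_row_sum)
  finally show ?thesis .
qed

lemma MH_eq:
  assumes "\<kappa> \<ge> 2"
  shows "MH \<kappa> ell q b c = (\<Sum>k\<in>{0..ell-b}. \<Sum>l\<in>{0..b}.
     if b + k - l = c then bino (ell-b) q k * bino b (q / (real \<kappa> - 1)) l else 0)"
proof -
  have k0: "real \<kappa> \<noteq> 0" "real \<kappa> - 1 \<noteq> 0" using assms by auto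
  have p1: "pmut \<kappa> q * (1 - 1/real \<kappa>) = q" and p2: "pmut \<kappa> q / real \<kappa> = q/(real \<kappa> - 1)"
    using k0 by (auto simp: pmut_def field_simps)
  show ?thesis unfolding MH_def Let_def p1 p2
  proof (intro sum.cong refl)
    fix k l assume l: "l \<in> {0..b}"
    then have e: "(int k - int l = int c - int b) = (b + k - l = c)" by auto
    show "(if int k - int l = int c - int b then real (ell - b choose k) * real (b choose l) * q ^ k * (1 - q) ^ (ell - b - k) *
          (q / (real \<kappa> - 1)) ^ l * (1 - q / (real \<kappa> - 1)) ^ (b - l) else 0) =
         (if b + k - l = c then bino (ell - b) q k * bino b (q / (real \<kappa> - 1)) l else 0)"
      unfolding e bino_def by (simp add: mult_ac)
  qed
qed

lemma MH_sum:
  assumes "\<kappa> \<ge> 2" "finite S"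
  shows "(\<Sum>c\<in>S. MH \<kappa> ell q b c) = (\<Sum>k\<in>{0..ell-b}. \<Sum>l\<in>{0..b}.
     if b + k - l \<in> S then bino (ell-b) q k * bino b (q / (real \<kappa> - 1)) l else 0)"
proof -
  let ?g = "\<lambda>c k l. if b + k - l = c then bino (ell-b) q k * bino b (q / (real \<kappa> - 1)) l else 0"
  have "(\<Sum>c\<in>S. MH \<kappa> ell q b c) = (\<Sum>c\<in>S. \<Sum>k\<in>{0..ell-b}. \<Sum>l\<in>{0..b}. ?g c k l)"
    by (simp add: MH_eq[OF assms(1)])
  also have "\<dots> = (\<Sum>k\<in>{0..ell-b}. \<Sum>c\<in>S. \<Sum>l\<in>{0..b}. ?g c k l)" by (rule sum.swap)
  also have "\<dots> = (\<Sum>k\<in>{0..ell-b}. \<Sum>l\<in>{0..b}. \<Sum>c\<in>S. ?g c k l)"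
    by (rule sum.cong[OF refl], rule sum.swap)
  also have "\<dots> = (\<Sum>k\<in>{0..ell-b}. \<Sum>l\<in>{0..b}.
     if b + k - l \<in> S then bino (ell-b) q k * bino b (q / (real \<kappa> - 1)) l else 0)"
    using assms(2) by simp
  finally show ?thesis .
qed

lemma beta_bounds:
  assumes "\<kappa> \<ge> 2" "0 \<le> q"
  shows "0 \<le> q / (real \<kappa> - 1)" "q / (real \<kappa> - 1) \<le> q"
proof -
  have "real \<kappa> - 1 \<ge> 1" using assms by simp
  then show "0 \<le> q / (real \<kappa> - 1)" "q / (real \<kappa> - 1) \<le> q" using assms
    by (auto simp: divide_le_eq intro: mult_left_mono[of 1 _ q, simplified])
qed

lemma MH_nonneg:
  assumes "\<kappa> \<ge> 2" "0 \<le> q" "q \<le> 1"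
  shows "0 \<le> MH \<kappa> ell q b c"
proof -
  have "0 \<le> q / (real \<kappa> - 1)" "q / (real \<kappa> - 1) \<le> 1" using beta_bounds[OF assms(1,2)] assms by auto
  then show ?thesis unfolding MH_eq[OF assms(1)]
    using assms by (intro sum_nonneg) (auto intro!: mult_nonneg_nonneg bino_nonneg)
qed

lemma MH_upper:
  assumes "\<kappa> \<ge> 2" "0 \<le> q" "q \<le> 1" "finite S"
    and cond: "\<And>k l. l \<le> b \<Longrightarrow> b + k - l \<in> S \<Longrightarrow> m \<le> l"
  shows "(\<Sum>c\<in>S. MH \<kappa> ell q b c) \<le> 2 ^ b * (q / (real \<kappa> - 1)) ^ m"
proof -
  define \<beta> where "\<beta> = q / (real \<kappa> - 1)"
  have b0: "0 \<le> \<beta>" "\<beta> \<le> 1" using beta_bounds[OF assms(1,2)] assms unfolding \<beta>_def by auto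
  have "(\<Sum>c\<in>S. MH \<kappa> ell q b c) = (\<Sum>k\<in>{0..ell-b}. \<Sum>l\<in>{0..b}.
     if b + k - l \<in> S then bino (ell-b) q k * bino b \<beta> l else 0)"
    unfolding \<beta>_def by (rule MH_sum[OF assms(1,4)])
  also have "\<dots> \<le> (\<Sum>k\<in>{0..ell-b}. \<Sum>l\<in>{0..b}. bino (ell-b) q k * (if m \<le> l then bino b \<beta> l else 0))"
  proof (intro sum_mono)
    fix k l assume "l \<in> {0..b}"
    then show "(if b + k - l \<in> S then bino (ell-b) q k * bino b \<beta> l else 0)
       \<le> bino (ell-b) q k * (if m \<le> l then bino b \<beta> l else 0)"
      using cond[of l k] b0 assms bino_nonneg[of q "ell-b" k] bino_nonneg[of \<beta> b l] by auto
  qed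
  also have "\<dots> = (\<Sum>k\<in>{0..ell-b}. bino (ell-b) q k) * (\<Sum>l\<in>{0..b}. if m \<le> l then bino b \<beta> l else 0)"
    by (simp add: sum_product)
  also have "\<dots> = (\<Sum>l\<in>{0..b}. if m \<le> l then bino b \<beta> l else 0)" by (simp add: bino_sum)
  also have "\<dots> \<le> 2 ^ b * \<beta> ^ m" by (rule bino_tail[OF b0])
  finally show ?thesis unfolding \<beta>_def .
qed

lemma MH_lower:
  assumes "\<kappa> \<ge> 2" "0 \<le> q" "q \<le> 1" "finite S"
    and "k \<le> ell - b" "l \<le> b" "b + k - l \<in> S"
  shows "bino (ell-b) q k * bino b (q / (real \<kappa> - 1)) l \<le> (\<Sum>c\<in>S. MH \<kappa> ell q b c)"
proof -
  define \<beta> where "\<beta> = q / (real \<kappa> - 1)"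
  have b0: "0 \<le> \<beta>" "\<beta> \<le> 1" using beta_bounds[OF assms(1,2)] assms unfolding \<beta>_def by auto
  define g where "g = (\<lambda>k l. if b + k - l \<in> S then bino (ell-b) q k * bino b \<beta> l else 0)"
  have gn: "\<And>k l. 0 \<le> g k l" unfolding g_def using b0 assms by (auto intro!: mult_nonneg_nonneg bino_nonneg)
  have "bino (ell-b) q k * bino b \<beta> l = g k l" unfolding g_def using assms by simp
  also have "\<dots> \<le> (\<Sum>l\<in>{0..b}. g k l)" using assms gn by (intro member_le_sum) auto
  also have "\<dots> \<le> (\<Sum>k\<in>{0..ell-b}. \<Sum>l\<in>{0..b}. g k l)" using assms gn
    by (intro member_le_sum[where f = "\<lambda>k. \<Sum>l\<in>{0..b}. g k l"]) (auto intro: sum_nonneg)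
  also have "\<dots> = (\<Sum>c\<in>S. MH \<kappa> ell q b c)" unfolding g_def \<beta>_def by (rule MH_sum[OF assms(1,4), symmetric])
  finally show ?thesis unfolding \<beta>_def .
qed

lemma MH_rowsum:
  assumes "\<kappa> \<ge> 2" "b \<le> ell"
  shows "(\<Sum>c\<le>ell. MH \<kappa> ell q b c) = 1"
proof -
  define \<beta> where "\<beta> = q / (real \<kappa> - 1)"
  have "(\<Sum>c\<le>ell. MH \<kappa> ell q b c) = (\<Sum>k\<in>{0..ell-b}. \<Sum>l\<in>{0..b}.
     if b + k - l \<in> {..ell} then bino (ell-b) q k * bino b \<beta> l else 0)"
    unfolding \<beta>_def by (rule MH_sum[OF assms(1)]) simp
  also have "\<dots> = (\<Sum>k\<in>{0..ell-b}. \<Sum>l\<in>{0..b}. bino (ell-b) q k * bino b \<beta> l)"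
    using assms(2) by (intro sum.cong refl) auto
  also have "\<dots> = (\<Sum>k\<in>{0..ell-b}. bino (ell-b) q k) * (\<Sum>l\<in>{0..b}. bino b \<beta> l)"
    by (simp add: sum_product)
  also have "\<dots> = 1" by (simp add: bino_sum)
  finally show ?thesis .
qed

lemma MH_sub_le1:
  assumes "\<kappa> \<ge> 2" "0 \<le> q" "q \<le> 1" "b \<le> ell" "S \<subseteq> {..ell}"
  shows "(\<Sum>c\<in>S. MH \<kappa> ell q b c) \<le> 1"
proof -
  have "(\<Sum>c\<in>S. MH \<kappa> ell q b c) \<le> (\<Sum>c\<le>ell. MH \<kappa> ell q b c)"
    using assms by (intro sum_mono2) (auto intro: MH_nonneg)
  then show ?thesis using MH_rowsum[OF assms(1,4)] by simp
qed

context
  fixes \<kappa> K ell :: nat and q E D \<beta> :: real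
  assumes bdef: "\<beta> = q / (real \<kappa> - 1)" and k2: "\<kappa> \<ge> 2" and q0: "0 < q" and q1: "q \<le> 1/2" and ellK: "K + 2 \<le> ell"
    and hL: "E \<le> (1 - q) ^ ell" and E0: "0 < E"
    and hB: "1/2 \<le> (1 - \<beta>) ^ (K+1)"
    and hD: "\<forall>b\<le>K + 1. D \<le> real ((ell - b) choose (K + 1 - b)) * q ^ (K + 1 - b)"
    and D0: "0 < D" and D1: "D \<le> 1"
    and hS: "real (K+1) * 2^(K+1) * \<beta> \<le> D * E / 2"
begin


lemma bb: "0 \<le> \<beta>" "\<beta> \<le> 1" "\<beta> \<le> q"
  using beta_bounds[OF k2, of q] q0 q1 bdef by auto

lemma pow1q: "n \<le> ell \<Longrightarrow> E \<le> (1 - q) ^ n"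
proof -
  assume "n \<le> ell"
  then have "(1 - q) ^ ell \<le> (1 - q) ^ n" using q0 q1 by (intro power_decreasing) auto
  then show ?thesis using hL by linarith
qed

lemma pow1b: "n \<le> K + 1 \<Longrightarrow> 1/2 \<le> (1 - \<beta>) ^ n"
proof -
  assume "n \<le> K + 1"
  then have "(1 - \<beta>) ^ (K+1) \<le> (1 - \<beta>) ^ n" using bb by (intro power_decreasing) auto
  then show ?thesis using hB by linarith
qed

lemma low_i: "h \<le> K \<Longrightarrow> \<beta> * E / 2 \<le> MH \<kappa> ell q (h+1) h"
proof -
  assume h: "h \<le> K"
  have "bino (ell - (h+1)) q 0 * bino (h+1) \<beta> 1 \<le> (\<Sum>c\<in>{h}. MH \<kappa> ell q (h+1) c)"
    using q0 q1 unfolding bdef by (intro MH_lower[OF k2]) auto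
  moreover have "E \<le> bino (ell - (h+1)) q 0" unfolding bino_def using pow1q[of "ell - (h+1)"] by simp
  moreover have "\<beta> / 2 \<le> bino (h+1) \<beta> 1"
  proof -
    have "1/2 \<le> (1 - \<beta>) ^ h" using pow1b h by simp
    then have "\<beta> * (1/2) \<le> \<beta> * (1 - \<beta>) ^ h" using bb by (intro mult_left_mono) auto
    also have "\<dots> \<le> real (h+1) * (\<beta> * (1 - \<beta>) ^ h)" using bb mult_right_mono[of 1 "real (h+1)" "\<beta> * (1 - \<beta>) ^ h"] by simp
    finally show ?thesis unfolding bino_def by (simp add: mult_ac)
  qed
  ultimately have "E * (\<beta> / 2) \<le> MH \<kappa> ell q (h+1) h" using E0 bb mult_mono[of E "bino (ell - (h+1)) q 0" "\<beta> / 2" "bino (h+1) \<beta> 1"]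
    by simp
  moreover have "\<beta> * E / 2 = E * (\<beta> / 2)" by simp
  ultimately show ?thesis by linarith
qed

lemma up_ii: "h \<le> K \<Longrightarrow> MH \<kappa> ell q (h+1) h \<le> 2^(K+1) * \<beta>"
proof -
  assume h: "h \<le> K"
  have "(\<Sum>c\<in>{h}. MH \<kappa> ell q (h+1) c) \<le> 2^(h+1) * \<beta> ^ 1"
    unfolding bdef using q0 q1 by (intro MH_upper[OF k2]) auto
  moreover have "(2::real)^(h+1) \<le> 2^(K+1)" using h by (intro power_increasing) auto
  ultimately show ?thesis using bb mult_right_mono[of "(2::real)^(h+1)" "2^(K+1)" \<beta>] by simp
qed

lemma low_iii: "b \<le> K + 1 \<Longrightarrow> D * E / 2 \<le> MH \<kappa> ell q b (K+1)"
proof -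
  assume b: "b \<le> K + 1"
  have low: "bino (ell - b) q (K + 1 - b) * bino b \<beta> 0 \<le> (\<Sum>c\<in>{K+1}. MH \<kappa> ell q b c)"
    using q0 q1 b ellK unfolding bdef by (intro MH_lower[OF k2]) auto
  moreover have "D * E \<le> bino (ell - b) q (K + 1 - b)"
  proof -
    have "D * E \<le> (real ((ell - b) choose (K + 1 - b)) * q ^ (K + 1 - b)) * (1 - q) ^ (ell - b - (K + 1 - b))"
      using hD[rule_format, OF b] pow1q[of "ell - b - (K + 1 - b)"] D0 E0 by (intro mult_mono) auto
    then show ?thesis unfolding bino_def by simp
  qed
  moreover have "1/2 \<le> bino b \<beta> 0" unfolding bino_def using pow1b[OF b] by simp
  ultimately have "(D * E) * (1/2) \<le> bino (ell - b) q (K + 1 - b) * bino b \<beta> 0"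
    using D0 E0 bino_nonneg[of q "ell - b" "K + 1 - b"] q0 q1 by (intro mult_mono) auto
  with \<open>bino (ell - b) q (K + 1 - b) * bino b \<beta> 0 \<le> (\<Sum>c\<in>{K+1}. MH \<kappa> ell q b c)\<close>
  show ?thesis by simp
qed

lemma up_iv: "c + 2 \<le> b \<Longrightarrow> b \<le> K + 1 \<Longrightarrow> (\<Sum>h\<le>c. MH \<kappa> ell q b h) \<le> 2^(K+1) * \<beta>^2"
proof -
  assume cb: "c + 2 \<le> b" and b: "b \<le> K + 1"
  have "(\<Sum>h\<in>{..c}. MH \<kappa> ell q b h) \<le> 2^b * \<beta> ^ 2"
    unfolding bdef using q0 q1 cb by (intro MH_upper[OF k2]) auto
  moreover have "(2::real)^b \<le> 2^(K+1)" using b by (intro power_increasing) auto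
  ultimately show ?thesis using bb mult_right_mono[of "(2::real)^b" "2^(K+1)" "\<beta>^2"] by simp
qed

lemma small: "2^(K+1) * \<beta>^2 \<le> \<beta> * E / 2"
proof -
  have "(2::real)^(K+1) * \<beta> \<le> real (K+1) * 2^(K+1) * \<beta>"
    using bb mult_right_mono[of 1 "real (K+1)" "2^(K+1) * \<beta>"] by simp
  also have "\<dots> \<le> D * E / 2" by (rule hS)
  also have "\<dots> \<le> E / 2" using D1 E0 by simp
  finally have "\<beta> * (2^(K+1) * \<beta>) \<le> \<beta> * (E / 2)" using bb by (intro mult_left_mono) auto
  then show ?thesis by (simp add: power2_eq_square mult_ac)
qed

lemma dom_A: "c < b \<Longrightarrow> b \<le> K + 1 \<Longrightarrow> (\<Sum>h\<le>c. MH \<kappa> ell q b h) \<le> (\<Sum>h\<le>c. MH \<kappa> ell q (h+1) h)"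
proof -
  have case1: "(\<Sum>h\<le>c. MH \<kappa> ell q b h) \<le> (\<Sum>h\<le>c. MH \<kappa> ell q (h+1) h)"
    if cb: "c + 2 \<le> b" and b: "b \<le> K + 1" for c b
  proof -
    have "(\<Sum>h\<le>c. MH \<kappa> ell q b h) \<le> \<beta> * E / 2" using up_iv[OF cb b] small by linarith
    also have "\<dots> \<le> MH \<kappa> ell q (c+1) c" using low_i cb b by simp
    also have "\<dots> \<le> (\<Sum>h\<le>c. MH \<kappa> ell q (h+1) h)"
      using q0 q1 by (intro member_le_sum[where f = "\<lambda>h. MH \<kappa> ell q (h+1) h"] MH_nonneg[OF k2]) auto
    finally show ?thesis .
  qed
  assume cb: "c < b" and b: "b \<le> K + 1"
  show ?thesis
  proof (cases "c + 2 \<le> b")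
    case True then show ?thesis using case1 b by simp
  next
    case False
    then have bc: "b = c + 1" using cb by simp
    show ?thesis
    proof (cases c)
      case 0 then show ?thesis using bc by simp
    next
      case (Suc c')
      have "(\<Sum>h\<le>c'. MH \<kappa> ell q b h) \<le> (\<Sum>h\<le>c'. MH \<kappa> ell q (h+1) h)"
        using case1[of c' b] bc b Suc by simp
      then show ?thesis using Suc bc by simp
    qed
  qed
qed

lemma rem_B: "b \<le> K + 1 \<Longrightarrow>
   0 \<le> 1 - (\<Sum>h<b. MH \<kappa> ell q (h + 1) h) - (\<Sum>h\<in>{b..K}. MH \<kappa> ell q b h)"
proof -
  assume b: "b \<le> K + 1"
  have "(\<Sum>h\<in>{b..K+1}. MH \<kappa> ell q b h) \<le> 1"
    using q0 q1 b ellK by (intro MH_sub_le1[OF k2]) auto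
  moreover have "(\<Sum>h\<in>{b..K+1}. MH \<kappa> ell q b h) = (\<Sum>h\<in>{b..K}. MH \<kappa> ell q b h) + MH \<kappa> ell q b (K+1)"
    using b by (simp add: sum.cl_ivl_Suc)
  moreover have "(\<Sum>h<b. MH \<kappa> ell q (h + 1) h) \<le> real b * (2^(K+1) * \<beta>)"
    using sum_bounded_above[of "{..<b}" "\<lambda>h. MH \<kappa> ell q (h + 1) h" "2^(K+1) * \<beta>"] up_ii b by force
  moreover have "real b * (2^(K+1) * \<beta>) \<le> real (K+1) * 2^(K+1) * \<beta>"
    using b bb mult_right_mono[of "real b" "real (K+1)" "2^(K+1) * \<beta>"] by simp
  ultimately show ?thesis using hS low_iii[OF b] by linarith
qed

lemma MHK_nonneg: "b \<le> ell \<Longrightarrow> 0 \<le> MHK \<kappa> ell q K b c"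
  unfolding MHK_def using rem_B[of b] MH_nonneg[OF k2, of q] q0 q1 by auto

lemma MHK_cum1:
  assumes b: "b \<le> K + 1" and c: "K + 1 \<le> c"
  shows "(\<Sum>h\<le>c. MHK \<kappa> ell q K b h) = 1"
  using c
proof (induction c rule: dec_induct)
  case base
  have U: "{..K} = {..<b} \<union> {b..K}" using b by auto
  have "(\<Sum>h\<le>K. MHK \<kappa> ell q K b h) = (\<Sum>h<b. MHK \<kappa> ell q K b h) + (\<Sum>h\<in>{b..K}. MHK \<kappa> ell q K b h)"
    unfolding U by (rule sum.union_disjoint) auto
  also have "(\<Sum>h<b. MHK \<kappa> ell q K b h) = (\<Sum>h<b. MH \<kappa> ell q (h + 1) h)"
    using b by (intro sum.cong) (auto simp: MHK_def)
  also have "(\<Sum>h\<in>{b..K}. MHK \<kappa> ell q K b h) = (\<Sum>h\<in>{b..K}. MH \<kappa> ell q b h)"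
    using b by (intro sum.cong) (auto simp: MHK_def)
  finally have "(\<Sum>h\<le>K. MHK \<kappa> ell q K b h) = (\<Sum>h<b. MH \<kappa> ell q (h + 1) h) + (\<Sum>h\<in>{b..K}. MH \<kappa> ell q b h)" .
  moreover have "MHK \<kappa> ell q K b (K+1) = 1 - (\<Sum>h<b. MH \<kappa> ell q (h + 1) h) - (\<Sum>h\<in>{b..K}. MH \<kappa> ell q b h)"
    using b by (simp add: MHK_def)
  ultimately show ?case by simp
next
  case (step n)
  have "MHK \<kappa> ell q K b (Suc n) = 0" using b step(1) by (simp add: MHK_def)
  then show ?case using step by simp
qed

lemma MHK_rowsum: "b \<le> ell \<Longrightarrow> (\<Sum>c\<le>ell. MHK \<kappa> ell q K b c) = 1"
proof -
  assume b: "b \<le> ell"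
  show ?thesis
  proof (cases "b \<le> K + 1")
    case True then show ?thesis using MHK_cum1 ellK by simp
  next
    case False
    then have "(\<Sum>c\<le>ell. MHK \<kappa> ell q K b c) = (\<Sum>c\<le>ell. MH \<kappa> ell q b c)"
      by (intro sum.cong) (auto simp: MHK_def)
    then show ?thesis using MH_rowsum[OF k2 b] by simp
  qed
qed

lemma dominance:
  assumes b: "b \<le> ell" and c: "c \<le> ell"
  shows "(\<Sum>h\<le>c. MH \<kappa> ell q b h) \<le> (\<Sum>h\<le>c. MHK \<kappa> ell q K b h)"
proof (cases "b \<le> K + 1")
  case False
  then have "(\<Sum>h\<le>c. MHK \<kappa> ell q K b h) = (\<Sum>h\<le>c. MH \<kappa> ell q b h)"
    by (intro sum.cong) (auto simp: MHK_def)
  then show ?thesis by simp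
next
  case bK: True
  have lowpart: "(\<Sum>h<b. MH \<kappa> ell q b h) \<le> (\<Sum>h<b. MH \<kappa> ell q (h+1) h)"
  proof (cases b)
    case 0 then show ?thesis by simp
  next
    case (Suc b')
    then have e: "{..<b} = {..b'}" by auto
    show ?thesis unfolding e using dom_A[of b' b] Suc bK by simp
  qed
  consider "K + 1 \<le> c" | "c < b" | "b \<le> c" "c \<le> K" by linarith
  then show ?thesis
  proof cases
    case 1
    have "(\<Sum>h\<in>{..c}. MH \<kappa> ell q b h) \<le> 1"
      by (rule MH_sub_le1[OF k2]) (use q0 q1 b c in auto)
    then show ?thesis using MHK_cum1[OF bK 1] by simp
  next
    case 2
    have "(\<Sum>h\<le>c. MHK \<kappa> ell q K b h) = (\<Sum>h\<le>c. MH \<kappa> ell q (h+1) h)"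
      using 2 bK by (intro sum.cong) (auto simp: MHK_def)
    then show ?thesis using dom_A[OF 2 bK] by simp
  next
    case 3
    have U: "{..c} = {..<b} \<union> {b..c}" using 3 by auto
    have "(\<Sum>h\<le>c. MH \<kappa> ell q b h) = (\<Sum>h<b. MH \<kappa> ell q b h) + (\<Sum>h\<in>{b..c}. MH \<kappa> ell q b h)"
      unfolding U by (rule sum.union_disjoint) auto
    moreover have "(\<Sum>h\<le>c. MHK \<kappa> ell q K b h) = (\<Sum>h<b. MHK \<kappa> ell q K b h) + (\<Sum>h\<in>{b..c}. MHK \<kappa> ell q K b h)"
      unfolding U by (rule sum.union_disjoint) auto
    moreover have "(\<Sum>h<b. MHK \<kappa> ell q K b h) = (\<Sum>h<b. MH \<kappa> ell q (h + 1) h)"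
      using bK by (intro sum.cong) (auto simp: MHK_def)
    moreover have "(\<Sum>h\<in>{b..c}. MHK \<kappa> ell q K b h) = (\<Sum>h\<in>{b..c}. MH \<kappa> ell q b h)"
      using bK 3 by (intro sum.cong) (auto simp: MHK_def)
    ultimately show ?thesis using lowpart by simp
  qed
qed

lemma all_props:
  "(\<forall>b\<le>ell. \<forall>c\<le>ell. 0 \<le> MHK \<kappa> ell q K b c)
   \<and> (\<forall>b\<le>ell. (\<Sum>c\<le>ell. MHK \<kappa> ell q K b c) = 1)
   \<and> (\<forall>b\<le>ell. \<forall>c\<le>ell. (\<Sum>h\<le>c. MH \<kappa> ell q b h) \<le> (\<Sum>h\<le>c. MHK \<kappa> ell q K b h))"
  by (blast intro: MHK_nonneg MHK_rowsum dominance)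

end

lemma quant_char:
  fixes M :: "nat \<Rightarrow> nat \<Rightarrow> real"
  assumes nn: "\<And>h. h \<le> ell \<Longrightarrow> 0 \<le> M b h" and rs: "(\<Sum>h\<le>ell. M b h) = 1"
    and u: "0 < u" "u \<le> 1"
  shows "quant M ell b u \<le> ell \<and> (\<Sum>h<quant M ell b u. M b h) < u \<and> u \<le> (\<Sum>h\<le>quant M ell b u. M b h)"
proof -
  define c0 where "c0 = (LEAST c. u \<le> (\<Sum>h\<le>c. M b h))"
  have ex: "u \<le> (\<Sum>h\<le>ell. M b h)" using rs u by simp
  have c1: "u \<le> (\<Sum>h\<le>c0. M b h)" unfolding c0_def by (rule LeastI[of _ ell], rule ex)
  have c2: "c0 \<le> ell" unfolding c0_def by (rule Least_le, rule ex)
  have c3: "(\<Sum>h<c0. M b h) < u"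
  proof (cases c0)
    case 0 then show ?thesis using u by simp
  next
    case (Suc c')
    then have "c' < c0" by simp
    then have "\<not> u \<le> (\<Sum>h\<le>c'. M b h)" unfolding c0_def by (rule not_less_Least)
    then show ?thesis using Suc by (simp add: lessThan_Suc_atMost)
  qed
  have mono: "(\<Sum>h\<le>x. M b h) \<le> (\<Sum>h<y. M b h)" if xy: "x < y" "y \<le> ell" for x y
  proof (rule sum_mono2)
    show "finite {..<y}" by simp
    show "{..x} \<subseteq> {..<y}" using xy by auto
    show "\<And>h. h \<in> {..<y} - {..x} \<Longrightarrow> 0 \<le> M b h" using xy nn by simp
  qed
  have uniq: "c = c0" if P: "c \<le> ell \<and> (\<Sum>h<c. M b h) < u \<and> u \<le> (\<Sum>h\<le>c. M b h)" for c
  proof (rule ccontr)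
    assume ne: "c \<noteq> c0"
    show False
    proof (cases "c < c0")
      case True
      have "(\<Sum>h\<le>c. M b h) \<le> (\<Sum>h<c0. M b h)" by (rule mono[OF True c2])
      then show ?thesis using P c3 by linarith
    next
      case False then have lt: "c0 < c" using ne by simp
      have "(\<Sum>h\<le>c0. M b h) \<le> (\<Sum>h<c. M b h)" by (rule mono[OF lt]) (use P in simp)
      then show ?thesis using P c1 by linarith
    qed
  qed
  have "quant M ell b u = c0" unfolding quant_def
  proof (rule the_equality)
    show "c0 \<le> ell \<and> (\<Sum>h<c0. M b h) < u \<and> u \<le> (\<Sum>h\<le>c0. M b h)" using c1 c2 c3 by simp
    show "\<And>c. c \<le> ell \<and> (\<Sum>h<c. M b h) < u \<and> u \<le> (\<Sum>h\<le>c. M b h) \<Longrightarrow> c = c0" by (rule uniq)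
  qed
  then show ?thesis using c1 c2 c3 by simp
qed

lemma quant_mono:
  fixes M1 M2 :: "nat \<Rightarrow> nat \<Rightarrow> real"
  assumes nn1: "\<And>h. h \<le> ell \<Longrightarrow> 0 \<le> M1 b h" and rs1: "(\<Sum>h\<le>ell. M1 b h) = 1"
    and nn2: "\<And>h. h \<le> ell \<Longrightarrow> 0 \<le> M2 b h" and rs2: "(\<Sum>h\<le>ell. M2 b h) = 1"
    and dom: "\<And>c. c \<le> ell \<Longrightarrow> (\<Sum>h\<le>c. M1 b h) \<le> (\<Sum>h\<le>c. M2 b h)"
    and u: "0 < u" "u \<le> 1"
  shows "quant M2 ell b u \<le> quant M1 ell b u"
proof (rule ccontr)
  let ?c1 = "quant M1 ell b u" and ?c2 = "quant M2 ell b u"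
  assume "\<not> ?c2 \<le> ?c1"
  then have lt: "?c1 < ?c2" by simp
  have A: "?c1 \<le> ell" "u \<le> (\<Sum>h\<le>?c1. M1 b h)" using quant_char[of ell M1 b u, OF nn1 rs1 u] by auto
  have B: "?c2 \<le> ell" "(\<Sum>h<?c2. M2 b h) < u" using quant_char[of ell M2 b u, OF nn2 rs2 u] by auto
  have "(\<Sum>h\<le>?c1. M2 b h) \<le> (\<Sum>h<?c2. M2 b h)" using lt B(1) nn2 by (intro sum_mono2) auto
  then show False using A B dom[OF A(1)] by linarith
qed


theorem mainTheorem3:
  fixes K \<kappa> :: nat and a :: real
  assumes "\<kappa> \<ge> 2" and "a > 0"
  shows "\<exists>N::nat. \<exists>\<epsilon>>0. \<exists>\<delta>>0. \<forall>ell::nat. \<forall>q::real.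
           N \<le> ell \<and> 0 < q \<and> q < \<epsilon> \<and> \<bar>real ell * q - a\<bar> < \<delta> \<longrightarrow>
             (\<forall>b\<le>ell. \<forall>c\<le>ell. 0 \<le> MHK \<kappa> ell q K b c)
           \<and> (\<forall>b\<le>ell. (\<Sum>c\<le>ell. MHK \<kappa> ell q K b c) = 1)
           \<and> (\<forall>b\<le>ell. \<forall>c\<le>ell. (\<Sum>h\<le>c. MH \<kappa> ell q b h) \<le> (\<Sum>h\<le>c. MHK \<kappa> ell q K b h))
           \<and> (\<forall>b\<le>ell. \<forall>u. 0 < u \<and> u \<le> 1 \<longrightarrow>
                quant (MH \<kappa> ell q) ell b u \<ge> quant (MHK \<kappa> ell q K) ell b u)"
proof -
  note k2 = assms(1) and a0 = assms(2)
  define d where "d = min 1 (a / (4 * real (K+1)))"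
  define D where "D = d ^ (K+1)"
  define E where "E = exp (- 3 * a)"
  define C0 where "C0 = real (K+1) * 2^(K+1)"
  define \<epsilon> where "\<epsilon> = min (1/2) (min (1 / (2 * real (K+1))) (min (a / (4 * real (K+1))) (D * E / (2 * C0))))"
  have d0: "0 < d" "d \<le> 1" using a0 by (auto simp: d_def)
  have D0: "0 < D" "D \<le> 1" unfolding D_def using d0 power_le_one[of d "K+1"] by auto
  have E0: "0 < E" by (simp add: E_def)
  have C00: "0 < C0" by (simp add: C0_def)
  have eps0: "0 < \<epsilon>" using a0 D0 E0 C00 by (simp add: \<epsilon>_def)
  show ?thesis
  proof (rule exI[of _ "K+2"], rule exI[of _ \<epsilon>], rule conjI[OF eps0], rule exI[of _ "a/2"], rule conjI, use a0 in simp, intro allI impI)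
    fix ell :: nat and q :: real
    assume H: "K + 2 \<le> ell \<and> 0 < q \<and> q < \<epsilon> \<and> \<bar>real ell * q - a\<bar> < a / 2"
    then have ellK: "K + 2 \<le> ell" and q0: "0 < q" and qe: "q < \<epsilon>" and lq: "\<bar>real ell * q - a\<bar> < a / 2" by auto
    define \<beta> where "\<beta> = q / (real \<kappa> - 1)"
    have bb: "0 \<le> \<beta>" "\<beta> \<le> q" using beta_bounds[OF k2, of q] q0 unfolding \<beta>_def by auto
    have e1: "q < 1/2" "q < 1 / (2 * real (K+1))" "q < a / (4 * real (K+1))" "q < (D * E) / (2 * C0)"
      using qe unfolding \<epsilon>_def by auto
    have q1: "q \<le> 1/2" using e1(1) by simp
    have qK: "q * real (K+1) \<le> 1/2"
    proof -
      have "q * (2 * real (K+1)) < 1" using pos_less_divide_eq[of "2 * real (K+1)" q 1] e1(2) by simp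
      then show ?thesis by (simp add: algebra_simps)
    qed
    have qa: "real (K+1) * q \<le> a / 4"
    proof -
      have "q * (4 * real (K+1)) < a" using pos_less_divide_eq[of "4 * real (K+1)" q a] e1(3) by simp
      then show ?thesis by (simp add: algebra_simps)
    qed
    have qS: "q * C0 \<le> D * E / 2"
    proof -
      have "q * (2 * C0) < D * E" using pos_less_divide_eq[of "2 * C0" q "D * E"] e1(4) C00 by simp
      then show ?thesis by (simp add: algebra_simps)
    qed
    have hL: "E \<le> (1 - q) ^ ell"
    proof -
      have "- q - 2 * q\<^sup>2 \<le> ln (1 - q)" using q0 q1 by (intro ln_one_minus_pos_lower_bound) auto
      moreover have "2 * q\<^sup>2 \<le> q" using q0 q1 by (simp add: power2_eq_square)
      ultimately have l1: "- 2 * q \<le> ln (1 - q)" by linarith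
      have "real ell * (- 2 * q) \<le> real ell * ln (1 - q)" using l1 by (intro mult_left_mono) auto
      moreover have "- 3 * a \<le> real ell * (- 2 * q)" using lq by linarith
      ultimately have "- 3 * a \<le> ln ((1 - q) ^ ell)" using q1 by (simp add: ln_realpow)
      then have "E \<le> exp (ln ((1 - q) ^ ell))" unfolding E_def by simp
      then show ?thesis using q1 by simp
    qed
    have hB: "1/2 \<le> (1 - \<beta>) ^ (K+1)"
    proof -
      have B1: "1 + real (K+1) * (- \<beta>) \<le> (1 + (- \<beta>)) ^ (K+1)"
        using bb q1 by (intro Bernoulli_inequality) auto
      have B2: "real (K+1) * \<beta> \<le> real (K+1) * q" using bb by (intro mult_left_mono) auto
      have B3: "real (K+1) * q \<le> 1/2" using qK by (simp add: mult.commute)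
      have B4: "real (K+1) * (- \<beta>) = - (real (K+1) * \<beta>)" by simp
      have B5: "(1 + (- \<beta>)) ^ (K+1) = (1 - \<beta>) ^ (K+1)" by simp
      show ?thesis using B1 B2 B3 B4 B5 by linarith
    qed
    have hD: "D \<le> real ((ell - b) choose (K + 1 - b)) * q ^ (K + 1 - b)" if b: "b \<le> K + 1" for b
    proof (cases "K + 1 - b = 0")
      case True then show ?thesis using D0 by simp
    next
      case False
      define m where "m = K + 1 - b"
      have m1: "1 \<le> m" "m \<le> K + 1" using False by (auto simp: m_def)
      have mle: "m \<le> ell - b" using ellK b by (simp add: m_def)
      have lb: "a / 4 \<le> real (ell - b) * q"
      proof -
        have "real (ell - b) = real ell - real b" using ellK b by simp
        then have "real (ell - b) * q = real ell * q - real b * q" by (simp add: algebra_simps)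
        moreover have "real b * q \<le> real (K+1) * q" using b q0 by (intro mult_right_mono) auto
        ultimately show ?thesis using lq qa by linarith
      qed
      have dle: "d \<le> real (ell - b) * q / real m"
      proof -
        have "d \<le> a / (4 * real (K+1))" by (simp add: d_def)
        also have "\<dots> \<le> a / (4 * real m)" using m1 a0 by (intro divide_left_mono) auto
        also have "\<dots> \<le> real (ell - b) * q / real m" using lb m1 by (simp add: divide_right_mono field_simps)
        finally show ?thesis .
      qed
      have "D \<le> d ^ m" unfolding D_def using d0 m1 by (intro power_decreasing) auto
      also have "\<dots> \<le> (real (ell - b) * q / real m) ^ m" using d0 by (intro power_mono[OF dle]) auto
      also have "\<dots> = (real (ell - b) / real m) ^ m * q ^ m" by (simp add: power_mult_distrib[symmetric])
      also have "\<dots> \<le> real ((ell - b) choose m) * q ^ m"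
        using binomial_ge_n_over_k_pow_k[OF mle] q0 by (intro mult_right_mono) auto
      finally show ?thesis by (simp add: m_def)
    qed
    have hS: "real (K+1) * 2^(K+1) * \<beta> \<le> D * E / 2"
    proof -
      have "real (K+1) * 2^(K+1) * \<beta> \<le> C0 * q" unfolding C0_def using bb by (intro mult_left_mono) auto
      then show ?thesis using qS by (simp add: mult.commute)
    qed
    have hDa: "\<forall>b\<le>K + 1. D \<le> real ((ell - b) choose (K + 1 - b)) * q ^ (K + 1 - b)" using hD by blast
    note P = all_props[OF \<beta>_def k2 q0 q1 ellK hL E0 hB hDa D0 hS]
    note nn = MHK_nonneg[OF \<beta>_def k2 q0 q1 ellK hL E0 hB hDa D0 hS]
    note rs = MHK_rowsum[OF \<beta>_def k2 q0 q1 ellK hL E0 hB hDa D0 hS]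
    note dm = dominance[OF \<beta>_def k2 q0 q1 ellK hL E0 hB hDa D0 hS]
    have Q: "\<forall>b\<le>ell. \<forall>u. 0 < u \<and> u \<le> 1 \<longrightarrow> quant (MHK \<kappa> ell q K) ell b u \<le> quant (MH \<kappa> ell q) ell b u"
    proof (intro allI impI)
      fix b :: nat and u :: real assume b: "b \<le> ell" and u: "0 < u \<and> u \<le> 1"
      show "quant (MHK \<kappa> ell q K) ell b u \<le> quant (MH \<kappa> ell q) ell b u"
      proof (rule quant_mono[where ell = ell and b = b])
        show "\<And>h. h \<le> ell \<Longrightarrow> 0 \<le> MH \<kappa> ell q b h" using MH_nonneg[OF k2, of q] q0 q1 by simp
        show "(\<Sum>h\<le>ell. MH \<kappa> ell q b h) = 1" by (rule MH_rowsum[OF k2 b])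
        show "\<And>h. h \<le> ell \<Longrightarrow> 0 \<le> MHK \<kappa> ell q K b h" by (rule nn[OF b])
        show "(\<Sum>h\<le>ell. MHK \<kappa> ell q K b h) = 1" by (rule rs[OF b])
        show "\<And>c. c \<le> ell \<Longrightarrow> (\<Sum>h\<le>c. MH \<kappa> ell q b h) \<le> (\<Sum>h\<le>c. MHK \<kappa> ell q K b h)"
          by (rule dm[OF b])
        show "0 < u" using u by simp
        show "u \<le> 1" using u by simp
      qed
    qed
    show "(\<forall>b\<le>ell. \<forall>c\<le>ell. 0 \<le> MHK \<kappa> ell q K b c)
           \<and> (\<forall>b\<le>ell. (\<Sum>c\<le>ell. MHK \<kappa> ell q K b c) = 1)
           \<and> (\<forall>b\<le>ell. \<forall>c\<le>ell. (\<Sum>h\<le>c. MH \<kappa> ell q b h) \<le> (\<Sum>h\<le>c. MHK \<kappa> ell q K b h))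
           \<and> (\<forall>b\<le>ell. \<forall>u. 0 < u \<and> u \<le> 1 \<longrightarrow>
                quant (MH \<kappa> ell q) ell b u \<ge> quant (MHK \<kappa> ell q K) ell b u)"
      by (rule conjI[OF conjunct1[OF P] conjI[OF conjunct1[OF conjunct2[OF P]] conjI[OF conjunct2[OF conjunct2[OF P]] Q]]])
  qed
qed

end
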